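(* Let $N\ge2$, $L^x,L^y>0$, and for each box $k\in\{1,\dots,N\}$ let constants $lb^x_k,lb^y_k>0$ be given. Let $F$ be the set of $(c,\ell,z,d)$, where $c=(c^s_k)$, $\ell=(\ell^s_k)$ for $k\in\{1,\dots,N\}$, $s\in\{x,y\}$, $z=(z^s_{p,q})\in\{0,1\}$ for all $s\in\{x,y\}$ and ordered pairs of distinct boxes $(p,q)$, and $d=(d^s_{i,j})$ with $d^s_{i,j}=d^s_{j,i}$ for unordered pairs, satisfying for every pair of distinct boxes $i,j$, every $s\in\{x,y\}$ and every $(p,q)\in\{(i,j),(j,i)\}$: \begin{align*} &\tfrac12\ell^s_p+lb^s_q z^s_{q,p}\le c^s_p\le L^s-\tfrac12\ell^s_p-lb^s_q z^s_{p,q},\qquad c^s_p+\tfrac12\ell^s_p\le c^s_q-\tfrac12\ell^s_q+L^s(1-z^s_{p,q}),\qquad \ell^s_p\ge lb^s_p,\\ &z^x_{i,j}+z^x_{j,i}+z^y_{i,j}+z^y_{j,i}\ge1,\qquad z^s_{i,j}+z^s_{j,i}\le1,\\ &c^s_p+\tfrac12\ell^s_p+L^s z^s_{p,q}\ge c^s_q-\tfrac12\ell^s_q+(lb^s_p+lb^s_q)(z^s_{i,j}+z^s_{j,i}),\\ &d^s_{i,j}\ge c^s_i-c^s_j,\qquad d^s_{i,j}\ge c^s_j-c^s_i. \end{align*} Fix distinct boxes $i,j$, an integer $m\ge1$, and distinct boxes $t^0=i,t^1,\dots,t^m,t^{m+1}=j$ (the path $P$). Fix $s\in\{x,y\}$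 and $\{p,q\}=\{i,j\}$. Define $\mathscr{M}^s_P(z)=1+\sum_{\xi=1}^{m+1}(z^s_{t^{\xi-1},t^\xi}-1)$ and $\gamma_P=\sum_{\xi=1}^m lb^s_{t^\xi}$. Then every point of $F$ satisfies \begin{align*} d^s_{i,j}&\ge\tfrac12(\ell^s_i+\ell^s_j)-L^s(1-z^s_{i,j}-z^s_{j,i})+\gamma_P\mathscr{M}^s_P(z),\\ d^s_{i,j}&\ge c^s_p-c^s_q+\ell^s_p+lb^s_q(z^s_{i,j}+z^s_{j,i})-L^s(1-z^s_{p,q})+\gamma_P\mathscr{M}^s_P(z),\\ d^s_{i,j}&\ge c^s_i-c^s_j+(lb^s_i+lb^s_j)z^s_{i,j}+\gamma_P\mathscr{M}^s_P(z),\\ 2d^s_{i,j}&\ge\ell^s_p+lb^s_q(z^s_{i,j}+z^s_{j,i})-L^s(1-z^s_{i,j}-z^s_{j,i})+2\gamma_P\mathscr{M}^s_P(z),\\ \tfrac12\ell^s_j+lb^s_i z^s_{i,j}+\gamma_P\mathscr{M}^s_P(z)&\le c^s_j,\\ c^s_i+\gamma_P\mathscr{M}^s_P(z)&\le L^s-\tfrac12\ell^s_i-lb^s_j z^s_{i,j},\\ c^s_i+\tfrac12\ell^s_i+\gamma_P\mathscr{M}^s_P(z)&\le c^s_j-\tfrac12\ell^s_j+L^s(1-z^s_{i,j}). \end{align*}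
   Context: Box $k$ has center $(c^x_k,c^y_k)$ and side lengths $(\ell^x_k,\ell^y_k)$. The set $F$ is the $N$-box refined unary formulation (the pairwise refined unary formulations for all pairs, sharing variables) augmented with the standard linearization variables $d^s_{i,j}$ of the Manhattan objective $|c^s_i-c^s_j|$. In the paper $lb^s_k=\beta_k/ub^s_k$ with $ub^s_k=\min\{\sqrt{\alpha_k\beta_k},L^s\}$. *)

theory Defs
  imports Complex_Main
begin

datatype dir = DX | DY

text \<open>Variables:
  c s k, l s k (centres and side lengths), z s p q (binary, ordered pairs of distinct boxes),
  d s i j (Manhattan linearisation variables, symmetric).\<close>
definition inF ::
  "nat \<Rightarrow> (dir \<Rightarrow> real) \<Rightarrow> (dir \<Rightarrow> nat \<Rightarrow> real)
   \<Rightarrow> (dir \<Rightarrow> nat \<Rightarrow> real) \<Rightarrow> (dir \<Rightarrow> nat \<Rightarrow> real)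
   \<Rightarrow> (dir \<Rightarrow> nat \<Rightarrow> nat \<Rightarrow> real) \<Rightarrow> (dir \<Rightarrow> nat \<Rightarrow> nat \<Rightarrow> real) \<Rightarrow> bool"
where
  "inF N L lb c l z d \<longleftrightarrow>
    (\<forall>s p q. p \<in> {1..N} \<and> q \<in> {1..N} \<and> p \<noteq> q \<longrightarrow> z s p q \<in> {0, 1}) \<and>
    (\<forall>s i j. i \<in> {1..N} \<and> j \<in> {1..N} \<and> i \<noteq> j \<longrightarrow> d s i j = d s j i) \<and>
    (\<forall>i j. i \<in> {1..N} \<and> j \<in> {1..N} \<and> i \<noteq> j \<longrightarrow>
      z DX i j + z DX j i + z DY i j + z DY j i \<ge> 1 \<and>
      (\<forall>s. z s i j + z s j i \<le> 1 \<and>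
           d s i j \<ge> c s i - c s j \<and> d s i j \<ge> c s j - c s i \<and>
           (\<forall>(p, q) \<in> {(i, j), (j, i)}.
              l s p / 2 + lb s q * z s q p \<le> c s p \<and>
              c s p \<le> L s - l s p / 2 - lb s q * z s p q \<and>
              c s p + l s p / 2 \<le> c s q - l s q / 2 + L s * (1 - z s p q) \<and>
              l s p \<ge> lb s p \<and>
              c s p + l s p / 2 + L s * z s p q
                \<ge> c s q - l s q / 2 + (lb s p + lb s q) * (z s i j + z s j i))))"

definition pathM :: "(dir \<Rightarrow> nat \<Rightarrow> nat \<Rightarrow> real) \<Rightarrow> dir \<Rightarrow> nat \<Rightarrow> (nat \<Rightarrow> nat) \<Rightarrow> real" where
  "pathM z s m t = 1 + (\<Sum>\<xi> = 1..m+1. (z s (t (\<xi> - 1)) (t \<xi>) - 1))"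

definition pathGamma :: "(dir \<Rightarrow> nat \<Rightarrow> real) \<Rightarrow> dir \<Rightarrow> nat \<Rightarrow> (nat \<Rightarrow> nat) \<Rightarrow> real" where
  "pathGamma lb s m t = (\<Sum>\<xi> = 1..m. lb s (t \<xi>))"

end

theory Submission
  imports Defs
begin

lemma chain:
  fixes c l lb :: "nat \<Rightarrow> real" and zz :: "nat \<Rightarrow> nat \<Rightarrow> real" and t :: "nat \<Rightarrow> nat"
  assumes step: "\<And>\<xi>. \<xi> \<in> {1..n} \<Longrightarrow> c (t (\<xi>-1)) + l (t (\<xi>-1)) / 2 \<le> c (t \<xi>) - l (t \<xi>) / 2"
  and lbl: "\<And>\<xi>. \<xi> \<in> {1..n} \<Longrightarrow> lb (t \<xi>) \<le> l (t \<xi>)"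
  and k: "1 \<le> k" "k \<le> n"
  shows "c (t k) - c (t 0) \<ge> l (t 0) / 2 + (\<Sum>\<xi>=1..k-1. lb (t \<xi>)) + l (t k) / 2"
  using k
proof (induction k)
  case 0 then show ?case by simp
next
  case (Suc k)
  show ?case
  proof (cases "k = 0")
    case True then show ?thesis using step[of 1] Suc by simp
  next
    case False
    have IH: "c (t k) - c (t 0) \<ge> l (t 0) / 2 + (\<Sum>\<xi>=1..k-1. lb (t \<xi>)) + l (t k) / 2"
      using Suc False by simp
    have s: "c (t k) + l (t k) / 2 \<le> c (t (Suc k)) - l (t (Suc k)) / 2"
      using step[of "Suc k"] Suc by simp
    have lb: "lb (t k) \<le> l (t k)" using lbl[of k] Suc False by simp
    have "(\<Sum>\<xi>=1..Suc k-1. lb (t \<xi>)) = (\<Sum>\<xi>=1..k-1. lb (t \<xi>)) + lb (t k)"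
      using False by (cases k) (auto simp: sum.atLeast_Suc_atMost_Suc_shift)
    then show ?thesis using IH s lb by simp
  qed
qed

definition "concl ci cj li lj bi bj Ls d a b E \<longleftrightarrow>
   d \<ge> (li + lj) / 2 - Ls * (1 - a - b) + E \<and>
   d \<ge> ci - cj + li + bj * (a + b) - Ls * (1 - a) + E \<and>
   d \<ge> cj - ci + lj + bi * (a + b) - Ls * (1 - b) + E \<and>
   d \<ge> ci - cj + (bi + bj) * a + E \<and>
   2 * d \<ge> li + bj * (a + b) - Ls * (1 - a - b) + 2 * E \<and>
   2 * d \<ge> lj + bi * (a + b) - Ls * (1 - a - b) + 2 * E \<and>
   lj / 2 + bi * a + E \<le> cj \<and>
   ci + E \<le> Ls - li / 2 - bj * a \<and>
   ci + li / 2 + E \<le> cj - lj / 2 + Ls * (1 - a)"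

definition "hyps ci cj li lj bi bj Ls d a b \<longleftrightarrow>
  (a = 0 \<or> a = 1) \<and> (b = 0 \<or> b = 1) \<and> a + b \<le> 1 \<and>
  d \<ge> ci - cj \<and> d \<ge> cj - ci \<and>
  li/2 + bj*b \<le> ci \<and> ci \<le> Ls - li/2 - bj*a \<and> ci + li/2 \<le> cj - lj/2 + Ls*(1-a) \<and> li \<ge> bi \<and>
  ci + li/2 + Ls*a \<ge> cj - lj/2 + (bi+bj)*(a+b) \<and>
  lj/2 + bi*a \<le> cj \<and> cj \<le> Ls - lj/2 - bi*b \<and> cj + lj/2 \<le> ci - li/2 + Ls*(1-b) \<and> lj \<ge> bj \<and>
  cj + lj/2 + Ls*b \<ge> ci - li/2 + (bj+bi)*(b+a) \<and> bi > 0 \<and> bj > 0 \<and> Ls > 0"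

lemma core1:
  fixes ci cj li lj bi bj Ls d a b E :: real
  assumes "hyps ci cj li lj bi bj Ls d a b" "E \<le> 0"
  shows "concl ci cj li lj bi bj Ls d a b E"
  using assms unfolding hyps_def concl_def
  apply (elim conjE disjE)
  apply (simp_all add: add_divide_distrib diff_divide_distrib)
  done

lemma core2:
  fixes ci cj li lj bi bj Ls d a b G :: real
  assumes "hyps ci cj li lj bi bj Ls d a b" "G \<ge> 0" "cj - ci \<ge> li/2 + G + lj/2"
  shows "concl ci cj li lj bi bj Ls d a b G"
  using assms unfolding hyps_def concl_def
  apply (elim conjE disjE)
  apply (simp_all add: add_divide_distrib diff_divide_distrib)
  done

theorem proposition7p3:
  fixes N :: nat and L :: "dir \<Rightarrow> real" and lb :: "dir \<Rightarrow> nat \<Rightarrow> real"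
    and c l :: "dir \<Rightarrow> nat \<Rightarrow> real" and z d :: "dir \<Rightarrow> nat \<Rightarrow> nat \<Rightarrow> real"
    and i j m p q :: nat and t :: "nat \<Rightarrow> nat" and s :: dir
  assumes N2: "N \<ge> 2"
    and Lpos: "\<forall>s'. L s' > 0"
    and lbpos: "\<forall>s'. \<forall>k \<in> {1..N}. lb s' k > 0"
    and ij: "i \<in> {1..N}" "j \<in> {1..N}" "i \<noteq> j"
    and m1: "m \<ge> 1"
    and path: "t 0 = i" "t (m + 1) = j" "\<forall>\<xi> \<in> {0..m+1}. t \<xi> \<in> {1..N}" "inj_on t {0..m+1}"
    and pq: "(p, q) \<in> {(i, j), (j, i)}"
    and F: "inF N L lb c l z d"
  shows
   "d s i j \<ge> (l s i + l s j) / 2 - L s * (1 - z s i j - z s j i)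
              + pathGamma lb s m t * pathM z s m t \<and>
    d s i j \<ge> c s p - c s q + l s p + lb s q * (z s i j + z s j i) - L s * (1 - z s p q)
              + pathGamma lb s m t * pathM z s m t \<and>
    d s i j \<ge> c s i - c s j + (lb s i + lb s j) * z s i j + pathGamma lb s m t * pathM z s m t \<and>
    2 * d s i j \<ge> l s p + lb s q * (z s i j + z s j i) - L s * (1 - z s i j - z s j i)
              + 2 * pathGamma lb s m t * pathM z s m t \<and>
    l s j / 2 + lb s i * z s i j + pathGamma lb s m t * pathM z s m t \<le> c s j \<and>
    c s i + pathGamma lb s m t * pathM z s m t \<le> L s - l s i / 2 - lb s j * z s i j \<and>
    c s i + l s i / 2 + pathGamma lb s m t * pathM z s m t \<le> c s j - l s j / 2 + L s * (1 - z s i j)"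
proof -
  note Fd = F[unfolded inF_def]
  have zb: "\<And>a b. a \<in> {1..N} \<Longrightarrow> b \<in> {1..N} \<Longrightarrow> a \<noteq> b \<Longrightarrow> z s a b \<in> {0,1}"
    using Fd[THEN conjunct1, rule_format] by blast
  have pair: "\<And>a b. a \<in> {1..N} \<Longrightarrow> b \<in> {1..N} \<Longrightarrow> a \<noteq> b \<Longrightarrow>
      z s a b + z s b a \<le> 1 \<and> d s a b \<ge> c s a - c s b \<and> d s a b \<ge> c s b - c s a \<and>
      l s a / 2 + lb s b * z s b a \<le> c s a \<and>
      c s a \<le> L s - l s a / 2 - lb s b * z s a b \<and>
      c s a + l s a / 2 \<le> c s b - l s b / 2 + L s * (1 - z s a b) \<and>
      l s a \<ge> lb s a \<and>
      c s a + l s a / 2 + L s * z s a b \<ge> c s b - l s b / 2 + (lb s a + lb s b) * (z s a b + z s b a)"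
  proof -
    fix a b assume ab: "a \<in> {1..N}" "b \<in> {1..N}" "a \<noteq> b"
    note X0 = Fd[THEN conjunct2, THEN conjunct2, rule_format, OF conjI[OF ab(1) conjI[OF ab(2) ab(3)]], THEN conjunct2, THEN spec[where x=s]]
    have X: "z s a b + z s b a \<le> 1 \<and>
           d s a b \<ge> c s a - c s b \<and> d s a b \<ge> c s b - c s a \<and>
              l s a / 2 + lb s b * z s b a \<le> c s a \<and>
              c s a \<le> L s - l s a / 2 - lb s b * z s a b \<and>
              c s a + l s a / 2 \<le> c s b - l s b / 2 + L s * (1 - z s a b) \<and>
              l s a \<ge> lb s a \<and>
              c s a + l s a / 2 + L s * z s a b
                \<ge> c s b - l s b / 2 + (lb s a + lb s b) * (z s a b + z s b a)"
      using X0 by simp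
    then show "?thesis a b" by blast
  qed
  have dsym: "d s j i = d s i j" using Fd[THEN conjunct2, THEN conjunct1, rule_format, of i j s] ij by simp
  note Pij = pair[OF ij] and Pji = pair[OF ij(2) ij(1) ij(3)[symmetric]]
  have Lp: "L s > 0" using Lpos by simp
  have lbi: "lb s i > 0" and lbj: "lb s j > 0" using lbpos ij by auto
  have zij: "z s i j \<in> {0,1}" and zji: "z s j i \<in> {0,1}" using zb ij by auto
  have tin: "\<And>\<xi>. \<xi> \<in> {1..m+1} \<Longrightarrow> t (\<xi>-1) \<in> {1..N} \<and> t \<xi> \<in> {1..N} \<and> t (\<xi>-1) \<noteq> t \<xi>"
  proof -
    fix \<xi> :: nat assume h: "\<xi> \<in> {1..m+1}"
    have "t (\<xi>-1) \<noteq> t \<xi>" using path(4) h using inj_onD[OF path(4), of "\<xi>-1" \<xi>] h by fastforce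
    then show "?thesis \<xi>" using path(3) h by auto
  qed
  define G where "G = pathGamma lb s m t"
  define M where "M = pathM z s m t"
  have Gnn: "G \<ge> 0" unfolding G_def pathGamma_def
    using lbpos path(3) by (intro sum_nonneg) (auto intro: less_imp_le)
  have zc: "(z s i j = 0 \<and> z s j i = 0) \<or> (z s i j = 1 \<and> z s j i = 0) \<or> (z s i j = 0 \<and> z s j i = 1)"
    using zij zji Pij by auto
  have H: "hyps (c s i) (c s j) (l s i) (l s j) (lb s i) (lb s j) (L s) (d s i j) (z s i j) (z s j i)"
    unfolding hyps_def using Pij Pji dsym zij zji lbi lbj Lp by simp
  have pc: "(p = i \<and> q = j) \<or> (p = j \<and> q = i)" using pq by auto
  show ?thesis
  proof (cases "\<forall>\<xi>\<in>{1..m+1}. z s (t (\<xi>-1)) (t \<xi>) = 1")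
    case True
    have M1: "M = 1" unfolding M_def pathM_def using True by simp
    have ch: "c s (t (m+1)) - c s (t 0) \<ge> l s (t 0) / 2 + (\<Sum>\<xi>=1..m+1-1. lb s (t \<xi>)) + l s (t (m+1)) / 2"
    proof (rule chain[where n="m+1"])
      fix \<xi> assume h: "\<xi> \<in> {1..m+1}"
      show "c s (t (\<xi>-1)) + l s (t (\<xi>-1)) / 2 \<le> c s (t \<xi>) - l s (t \<xi>) / 2"
        using pair[of "t (\<xi>-1)" "t \<xi>"] tin[OF h] True h by auto
      show "lb s (t \<xi>) \<le> l s (t \<xi>)"
        using pair[of "t \<xi>" "t (\<xi>-1)"] tin[OF h] by auto
    qed auto
    hence ch': "c s j - c s i \<ge> l s i / 2 + G + l s j / 2" using path by (simp add: G_def pathGamma_def)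
    have "concl (c s i) (c s j) (l s i) (l s j) (lb s i) (lb s j) (L s) (d s i j) (z s i j) (z s j i) G"
      by (rule core2[OF H Gnn]) (use ch' in linarith)
    with pc show ?thesis unfolding concl_def G_def[symmetric] M_def[symmetric] M1
      by (elim disjE conjE) simp_all
  next
    case False
    then obtain \<xi>0 where x0: "\<xi>0 \<in> {1..m+1}" "z s (t (\<xi>0-1)) (t \<xi>0) \<noteq> 1" by auto
    have z0: "z s (t (\<xi>0-1)) (t \<xi>0) = 0" using zb tin[OF x0(1)] x0(2) by blast
    have nonpos: "\<forall>\<xi>\<in>{1..m+1}. z s (t (\<xi>-1)) (t \<xi>) - 1 \<le> 0" using zb tin by fastforce
    have "(\<Sum>\<xi> = 1..m+1. (z s (t (\<xi> - 1)) (t \<xi>) - 1)) =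
          (z s (t (\<xi>0-1)) (t \<xi>0) - 1) + (\<Sum>\<xi> \<in> {1..m+1} - {\<xi>0}. (z s (t (\<xi> - 1)) (t \<xi>) - 1))"
      by (rule sum.remove) (use x0 in auto)
    moreover have "(\<Sum>\<xi> \<in> {1..m+1} - {\<xi>0}. (z s (t (\<xi> - 1)) (t \<xi>) - 1)) \<le> 0"
      using nonpos by (intro sum_nonpos) auto
    ultimately have "M \<le> 0" unfolding M_def pathM_def using z0 by simp
    hence GM: "G * M \<le> 0" using Gnn by (simp add: mult_nonneg_nonpos)
    have "concl (c s i) (c s j) (l s i) (l s j) (lb s i) (lb s j) (L s) (d s i j) (z s i j) (z s j i) (G*M)"
      by (rule core1[OF H GM])
    with pc show ?thesis unfolding concl_def G_def[symmetric] M_def[symmetric]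
      by (elim disjE conjE) (simp_all add: mult.assoc)
  qed
qed

end
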